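(* Let $(S,M)$ be a Coxeter matrix and let $e=\{s_+,s_-\}\subseteq S$ with $m_{s_+,s_-}=3$. Let $(S/e,N)$ be the edge contraction of $(S,M)$ along $e$. Then the assignment \[ s\mapsto s \quad (s\in S\setminus\{s_+,s_-\}),\qquad s_0\mapsto s_+s_-s_+ \] extends to a well-defined group homomorphism $\phi: W_{S/e,N}\to W_{S,M}$, and $\phi$ is injective.
   Context: A Coxeter matrix on a nonempty set $S$ is a symmetric matrix $M=(m_{s,s'})_{s,s'\in S}$ with entries in $\mathbb Z_{\ge 1}\sqcup\{\infty\}$ such that $m_{s,s'}=1$ iff $s=s'$. The Coxeter group $W_{S,M}$ is the group generated by the elements of $S$ subject to the relations $(ss')^{m_{s,s'}}=1$ for all $s,s'$ with $m_{s,s'}\neq\infty$. Edge contraction: let $e=\{s_+,s_-\}\subseteq S$ with $s_+\ne s_-$ and $m_{s_+,s_-}=3$. Let $s_0$ be a new symbol and $S/e=(S\setminus\{s_+,s_-\})\sqcup\{s_0\}$. Define the symmetric matrix $N=(n_{s,s'})_{s,s'\in S/e}$ by $n_{s,s}=1$ for all $s$; $n_{s,s'}=m_{s,s'}$ for distinct $s,s'\in S\setminus\{s_+,s_-\}$; and for $s\in S\setminus\{s_+,s_-\}$: $n_{s,s_0}=n_{s_0,s}=m_{s,s_+}+m_{s,s_-}-2$ if $m_{s,s_+}=2$ or $m_{s,s_-}=2$ (with the convention $\infty+k=\infty$), and $n_{s,s_0}=n_{s_0,s}=\infty$ if both $m_{s,s_+}>2$ and $m_{s,s_-}>2$. Then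 $N$ is a Coxeter matrix, and $(S/e,N)$ is called the edge contraction of $(S,M)$ along $e$. *)

theory Defs
  imports "HOL-Algebra.Group" "HOL-Library.Extended_Nat"
begin

definition coxeter_matrix :: "'a set \<Rightarrow> ('a \<Rightarrow> 'a \<Rightarrow> enat) \<Rightarrow> bool" where
  "coxeter_matrix S M \<longleftrightarrow> S \<noteq> {} \<and>
     (\<forall>s\<in>S. \<forall>t\<in>S. M s t = M t s \<and> M s t \<ge> 1 \<and> (M s t = 1 \<longleftrightarrow> s = t))"

inductive cox_eq :: "'a set \<Rightarrow> ('a \<Rightarrow> 'a \<Rightarrow> enat) \<Rightarrow> 'a list \<Rightarrow> 'a list \<Rightarrow> bool"
  for S M where
  refl: "set w \<subseteq> S \<Longrightarrow> cox_eq S M w w"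
| rel: "set u \<subseteq> S \<Longrightarrow> set v \<subseteq> S \<Longrightarrow> s \<in> S \<Longrightarrow> t \<in> S \<Longrightarrow> M s t = enat m \<Longrightarrow>
        cox_eq S M (u @ concat (replicate m [s, t]) @ v) (u @ v)"
| sym: "cox_eq S M w w' \<Longrightarrow> cox_eq S M w' w"
| trans: "cox_eq S M w w' \<Longrightarrow> cox_eq S M w' w'' \<Longrightarrow> cox_eq S M w w''"

definition cox_class :: "'a set \<Rightarrow> ('a \<Rightarrow> 'a \<Rightarrow> enat) \<Rightarrow> 'a list \<Rightarrow> 'a list set" where
  "cox_class S M w = {w'. cox_eq S M w w'}"

definition coxeter_group :: "'a set \<Rightarrow> ('a \<Rightarrow> 'a \<Rightarrow> enat) \<Rightarrow> 'a list set monoid" where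
  "coxeter_group S M =
     \<lparr> carrier = {cox_class S M w | w. set w \<subseteq> S},
       mult = (\<lambda>A B. {w. \<exists>a\<in>A. \<exists>b\<in>B. cox_eq S M (a @ b) w}),
       one = cox_class S M [] \<rparr>"

text \<open>Edge contraction along e = {sp, sm}: the new vertex set is
  Some ` (S - {sp, sm}) together with the new symbol s0 = None.\<close>
definition contract_set :: "'a set \<Rightarrow> 'a \<Rightarrow> 'a \<Rightarrow> 'a option set" where
  "contract_set S sp sm = Some ` (S - {sp, sm}) \<union> {None}"

definition contract_matrix :: "('a \<Rightarrow> 'a \<Rightarrow> enat) \<Rightarrow> 'a \<Rightarrow> 'a \<Rightarrow> 'a option \<Rightarrow> 'a option \<Rightarrow> enat" where
  "contract_matrix M sp sm x y =
     (case (x, y) of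
        (Some s, Some t) \<Rightarrow> M s t
      | (None, None) \<Rightarrow> 1
      | (Some s, None) \<Rightarrow> (if M s sp = 2 \<or> M s sm = 2 then M s sp + M s sm - 2 else \<infinity>)
      | (None, Some s) \<Rightarrow> (if M s sp = 2 \<or> M s sm = 2 then M s sp + M s sm - 2 else \<infinity>))"

end

theory Submission
  imports Defs
begin
lemma cox_eq_set: "cox_eq S M w w' \<Longrightarrow> set w \<subseteq> S \<and> set w' \<subseteq> S"
  by (induction rule: cox_eq.induct) auto

lemma cox_eq_cong:
  "cox_eq S M w w' \<Longrightarrow> set u \<subseteq> S \<Longrightarrow> set v \<subseteq> S \<Longrightarrow> cox_eq S M (u @ w @ v) (u @ w' @ v)"
proof (induction arbitrary: u v rule: cox_eq.induct)
  case (refl w)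
  then show ?case by (intro cox_eq.refl) auto
next
  case (rel u0 v0 s t m)
  have "cox_eq S M ((u @ u0) @ concat (replicate m [s, t]) @ (v0 @ v)) ((u @ u0) @ (v0 @ v))"
    by (rule cox_eq.rel) (use rel in auto)
  then show ?case by simp
next
  case (sym w w')
  then show ?case by (blast intro: cox_eq.sym)
next
  case (trans w w' w'')
  then show ?case by (blast intro: cox_eq.trans)
qed

lemma cox_eq_appL: "cox_eq S M w w' \<Longrightarrow> set u \<subseteq> S \<Longrightarrow> cox_eq S M (u @ w) (u @ w')"
  using cox_eq_cong[of S M w w' u "[]"] by simp

lemma cox_eq_appR: "cox_eq S M w w' \<Longrightarrow> set v \<subseteq> S \<Longrightarrow> cox_eq S M (w @ v) (w' @ v)"
  using cox_eq_cong[of S M w w' "[]" v] by simp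

lemma cox_eq_app: "cox_eq S M w w' \<Longrightarrow> cox_eq S M v v' \<Longrightarrow> cox_eq S M (w @ v) (w' @ v')"
  by (meson cox_eq.trans cox_eq_appL cox_eq_appR cox_eq_set)

lemma cox_eq_parity: "cox_eq S M w w' \<Longrightarrow> even (length w + length w')"
  by (induction rule: cox_eq.induct) (auto simp: length_concat sum_list_replicate)

lemma cox_eq_ss: "s \<in> S \<Longrightarrow> M s s = 1 \<Longrightarrow> set u \<subseteq> S \<Longrightarrow> set v \<subseteq> S \<Longrightarrow>
   cox_eq S M (u @ [s, s] @ v) (u @ v)"
  using cox_eq.rel[of u S v s s M 1] by (simp add: one_enat_def)

lemma cox_eq_inv:
  assumes "set w \<subseteq> S" "\<forall>s\<in>S. M s s = 1"
  shows "cox_eq S M (rev w @ w) []"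
  using assms(1)
proof (induction w)
  case Nil
  then show ?case by (auto intro: cox_eq.refl)
next
  case (Cons x w)
  have "cox_eq S M (rev w @ [x, x] @ w) (rev w @ w)"
    using Cons assms(2) by (intro cox_eq_ss) auto
  then show ?case using Cons by (auto intro: cox_eq.trans)
qed

lemma cox_eq_inv2:
  assumes "set w \<subseteq> S" "\<forall>s\<in>S. M s s = 1"
  shows "cox_eq S M (w @ rev w) []"
  using cox_eq_inv[of "rev w" S M] assms by simp

lemma cox_eq_solve:
  assumes "cox_eq S M (a @ y) []" "\<forall>s\<in>S. M s s = 1"
  shows "cox_eq S M y (rev a)"
proof -
  have sa: "set a \<subseteq> S" "set y \<subseteq> S" using cox_eq_set[OF assms(1)] by auto
  have "cox_eq S M (rev a @ (a @ y)) (rev a @ [])"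
    by (rule cox_eq_appL[OF assms(1)]) (use sa in auto)
  moreover have "cox_eq S M ((rev a @ a) @ y) ([] @ y)"
    by (rule cox_eq_appR[OF cox_eq_inv]) (use sa assms in auto)
  ultimately show ?thesis by (auto intro: cox_eq.trans cox_eq.sym)
qed

fun U :: "real \<Rightarrow> nat \<Rightarrow> real" where
  "U c 0 = 0" | "U c (Suc 0) = 1" | "U c (Suc (Suc n)) = 2 * c * U c (Suc n) - U c n"

fun alt :: "'b \<Rightarrow> 'b \<Rightarrow> nat \<Rightarrow> 'b list" where
  "alt x y 0 = []" | "alt x y (Suc n) = (if even n then x else y) # alt x y n"

lemma alt_snoc: "alt x y (Suc n) = alt y x n @ [x]"
  by (induction n) auto

lemma alt_set: "set (alt x y n) \<subseteq> {x, y}"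
  by (induction n) auto

lemma alt_len[simp]: "length (alt x y n) = n"
  by (induction n) auto

lemma alt_add: "alt x y (n + k) = (if even k then alt x y n else alt y x n) @ alt x y k"
  by (induction n) auto

lemma rev_alt: "rev (alt x y n) = (if even n then alt y x n else alt x y n)"
proof (induction n arbitrary: x y)
  case 0
  then show ?case by simp
next
  case (Suc n)
  have a: "rev (alt x y (Suc n)) = x # rev (alt y x n)" by (subst alt_snoc) simp
  show ?case
  proof (cases "even n")
    case True
    have "alt x y (Suc n) = x # alt x y n" using True by simp
    then show ?thesis using a Suc[of y x] True by simp
  next
    case False
    have "alt y x (Suc n) = x # alt y x n" using False by simp
    then show ?thesis using a Suc[of y x] False by simp
  qed
qed

lemma alt_double: "alt x y (2 * m) = concat (replicate m [y, x])"
proof (induction m)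
  case 0
  then show ?case by simp
next
  case (Suc m)
  have "alt x y (2 * Suc m) = alt x y (Suc (Suc (2 * m)))" by simp
  then show ?case using Suc by simp
qed

lemma U_sin:
  assumes "sin th \<noteq> 0"
  shows "U (cos th) n = sin (real n * th) / sin th"
proof (induction "cos th" n rule: U.induct)
  case 1
  then show ?case by simp
next
  case 2
  then show ?case using assms by simp
next
  case (3 n)
  have e: "sin (real (Suc (Suc n)) * th) = 2 * cos th * sin (real (Suc n) * th) - sin (real n * th)"
  proof -
    have a: "real (Suc (Suc n)) * th = real (Suc n) * th + th" by (simp add: algebra_simps)
    have b: "real n * th = real (Suc n) * th - th" by (simp add: algebra_simps)
    show ?thesis unfolding a b sin_add sin_diff by (simp add: algebra_simps)
  qed
  show ?case using 3 assms unfolding U.simps e by (simp add: field_simps)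
qed

lemma U_ge:
  assumes "1 \<le> c"
  shows "real n \<le> U c n \<and> U c n + 1 \<le> U c (Suc n)"
proof (induction n)
  case 0
  then show ?case by simp
next
  case (Suc n)
  have h0: "0 \<le> U c (Suc n)" using Suc by linarith
  have h: "2 * U c (Suc n) \<le> 2 * c * U c (Suc n)" using mult_right_mono[OF assms h0] by simp
  have e: "U c (Suc (Suc n)) = 2 * c * U c (Suc n) - U c n" by simp
  show ?case
    apply (intro conjI)
    using Suc h e by (simp_all only: of_nat_Suc) linarith+
qed

locale cox =
  fixes S :: "'b set" and M :: "'b \<Rightarrow> 'b \<Rightarrow> enat" and B :: "'b \<Rightarrow> 'b \<Rightarrow> real"
  assumes Mdiag: "s \<in> S \<Longrightarrow> M s s = 1"
    and Msym: "s \<in> S \<Longrightarrow> t \<in> S \<Longrightarrow> M s t = M t s"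
    and Mge2: "s \<in> S \<Longrightarrow> t \<in> S \<Longrightarrow> s \<noteq> t \<Longrightarrow> M s t = enat m \<Longrightarrow> 2 \<le> m"
    and Bdiag: "B s s = 1"
    and Bsym: "s \<in> S \<Longrightarrow> t \<in> S \<Longrightarrow> B s t = B t s"
    and Bfin: "s \<in> S \<Longrightarrow> t \<in> S \<Longrightarrow> s \<noteq> t \<Longrightarrow> M s t = enat m \<Longrightarrow> B s t = - cos (pi / real m)"
    and Binf: "s \<in> S \<Longrightarrow> t \<in> S \<Longrightarrow> s \<noteq> t \<Longrightarrow> M s t = \<infinity> \<Longrightarrow> B s t \<le> -1"
begin

abbreviation ceq where "ceq \<equiv> cox_eq S M"

definition D :: "'b \<Rightarrow> ('b \<Rightarrow> real) \<Rightarrow> ('b \<Rightarrow> real)" where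
  "D s h = (\<lambda>x. h x - 2 * B s x * h s)"

definition E :: "'b list \<Rightarrow> ('b \<Rightarrow> real) \<Rightarrow> ('b \<Rightarrow> real)" where
  "E w = fold D w"

lemma E_Nil[simp]: "E [] h = h" by (simp add: E_def)
lemma E_Cons: "E (x # w) h = E w (D x h)" by (simp add: E_def)
lemma E_app: "E (v @ w) h = E w (E v h)" by (simp add: E_def)
lemma D_self: "D s h s = - h s" by (simp add: D_def Bdiag)
lemma E_snoc_self: "E (w @ [s]) h s = - E w h s" by (simp add: E_app E_Cons D_self)
lemma DD: "D s (D s h) = h" by (simp add: D_def Bdiag)

lemma Mdiag': "\<forall>s\<in>S. M s s = 1" using Mdiag by auto

lemma E_alt:
  assumes "B x y = - c" "B y x = - c"
  shows "E (alt x y k) h y = U c (Suc k) * h (if even k then y else x) + U c k * h (if even k then x else y)"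
proof (induction k arbitrary: h)
  case 0
  then show ?case by simp
next
  case (Suc k)
  show ?case
  proof (cases "even k")
    case True
    have "E (alt x y (Suc k)) h y = E (alt x y k) (D x h) y" using True by (simp add: E_Cons)
    also have "\<dots> = U c (Suc k) * (D x h) y + U c k * (D x h) x" using Suc[of "D x h"] True by simp
    also have "\<dots> = U c (Suc (Suc k)) * h x + U c (Suc k) * h y"
      using assms by (simp add: D_def Bdiag algebra_simps)
    finally show ?thesis using True by simp
  next
    case False
    have "E (alt x y (Suc k)) h y = E (alt x y k) (D y h) y" using False by (simp add: E_Cons)
    also have "\<dots> = U c (Suc k) * (D y h) x + U c k * (D y h) y" using Suc[of "D y h"] False by simp
    also have "\<dots> = U c (Suc (Suc k)) * h y + U c (Suc k) * h x"
      using assms by (simp add: D_def Bdiag algebra_simps)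
    finally show ?thesis using False by simp
  qed
qed

lemma E_proj:
  assumes "set w \<subseteq> {s, t}" "B s z = l * B s s + mu * B s t" "B t z = l * B t s + mu * B t t"
  shows "E w h z - l * E w h s - mu * E w h t = h z - l * h s - mu * h t"
  using assms(1)
proof (induction w arbitrary: h)
  case Nil
  then show ?case by simp
next
  case (Cons y w)
  have y: "y = s \<or> y = t" using Cons by auto
  have "E (y # w) h z - l * E (y # w) h s - mu * E (y # w) h t
      = (D y h) z - l * (D y h) s - mu * (D y h) t" using Cons by (simp add: E_Cons)
  also have "\<dots> = h z - l * h s - mu * h t - 2 * h y * (B y z - l * B y s - mu * B y t)"
    by (simp add: D_def algebra_simps)
  also have "\<dots> = h z - l * h s - mu * h t" using y assms(2,3) by auto
  finally show ?case .
qed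

lemma rel_id:
  assumes "s \<in> S" "t \<in> S" "M s t = enat m"
  shows "E (concat (replicate m [s, t])) h = h"
proof (cases "s = t")
  case True
  then have "m = 1" using assms Mdiag by (simp add: one_enat_def)
  then show ?thesis using True by (simp add: E_Cons DD)
next
  case False
  have m2: "2 \<le> m" using Mge2 assms False by blast
  define th where "th = pi / real m"
  define c where "c = cos th"
  have th0: "0 < th" "th \<le> pi / 2" using m2 by (auto simp: th_def field_simps)
  have sth: "sin th > 0" using th0 by (intro sin_gt_zero) auto
  have c0: "0 \<le> c" unfolding c_def using th0 by (intro cos_ge_zero) auto
  have c1: "c < 1" unfolding c_def using cos_monotone_0_pi[of 0 th] th0 by simp
  have Bst: "B s t = - c" using Bfin[OF assms(1,2) False assms(3)] by (simp add: c_def th_def)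
  have Bts: "B t s = - c" using Bst Bsym assms by simp
  have mth: "real m * th = pi" using m2 by (simp add: th_def)
  have U2m: "U c (2 * m) = 0"
  proof -
    have e: "2 * real m * th = 2 * pi" using mth by (simp add: mult.assoc)
    show ?thesis using U_sin[of th "2*m"] sth e unfolding c_def by simp
  qed
  have U2m1: "U c (Suc (2 * m)) = 1"
  proof -
    have "real (Suc (2 * m)) * th = th + 2 * pi" using mth by (simp add: algebra_simps)
    then show ?thesis using U_sin[of th "Suc (2*m)"] sth unfolding c_def by (simp add: sin_periodic)
  qed
  have U2m1': "U c (2 * m - 1) = -1"
  proof -
    have "real (2 * m - 1) * th = - th + 2 * pi" using mth m2 by (simp add: of_nat_diff algebra_simps)
    then show ?thesis using U_sin[of th "2*m - 1"] sth unfolding c_def by (simp add: sin_periodic)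
  qed
  define w where "w = concat (replicate m [s, t])"
  have w: "w = alt t s (2 * m)" by (simp add: w_def alt_double)
  have ws: "set w \<subseteq> {s, t}" using alt_set[of t s "2*m"] w by auto
  have Es: "E w g s = g s" for g
    using E_alt[OF Bts Bst, of "2*m" g] U2m U2m1 w by simp
  have w2: "w = alt s t (2 * m - 1) @ [t]"
    using alt_snoc[of t s "2 * m - 1"] w m2 by (simp add: Suc_diff_1)
  have Et: "E w g t = g t" for g
  proof -
    have "E w g t = - E (alt s t (2 * m - 1)) g t" using w2 E_snoc_self by simp
    also have "\<dots> = g t"
      using E_alt[OF Bst Bts, of "2*m - 1" g] U2m1' U2m m2 by (simp add: Suc_diff_1)
    finally show ?thesis .
  qed
  have "c * c < 1 * 1" by (rule mult_strict_mono) (use c0 c1 in auto)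
  then have d: "1 - c * c \<noteq> 0" by simp
  show ?thesis
  proof
    fix z
    define l where "l = (B s z + c * B t z) / (1 - c * c)"
    define mu where "mu = (B t z + c * B s z) / (1 - c * c)"
    have e1': "l - mu * c = B s z"
    proof -
      have "l - mu * c = ((B s z + c * B t z) - c * (B t z + c * B s z)) / (1 - c * c)"
        unfolding l_def mu_def by (simp add: diff_divide_distrib mult.commute)
      also have "\<dots> = B s z * (1 - c * c) / (1 - c * c)" by (simp add: algebra_simps)
      also have "\<dots> = B s z" using d by simp
      finally show ?thesis .
    qed
    have e2': "mu - l * c = B t z"
    proof -
      have "mu - l * c = ((B t z + c * B s z) - c * (B s z + c * B t z)) / (1 - c * c)"
        unfolding l_def mu_def by (simp add: diff_divide_distrib mult.commute)
      also have "\<dots> = B t z * (1 - c * c) / (1 - c * c)" by (simp add: algebra_simps)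
      also have "\<dots> = B t z" using d by simp
      finally show ?thesis .
    qed
    have e1: "B s z = l * B s s + mu * B s t" using e1' unfolding Bst Bdiag by simp
    have e2: "B t z = l * B t s + mu * B t t" using e2' unfolding Bts Bdiag by simp
    from E_proj[OF ws e1 e2, of h] Es[of h] Et[of h] show "E (concat (replicate m [s, t])) h z = h z"
      unfolding w_def by simp
  qed
qed

lemma E_cong: "ceq w w' \<Longrightarrow> E w h = E w' h"
proof (induction arbitrary: h rule: cox_eq.induct)
  case (rel u v s t m)
  then show ?case using rel_id[of s t m] by (simp add: E_app)
qed auto

end

lemmas [trans] = cox_eq.trans

context cox begin

definition len :: "'b list \<Rightarrow> nat" where
  "len w = (LEAST n. \<exists>w'. ceq w w' \<and> length w' = n)"

lemma len_ex: "set w \<subseteq> S \<Longrightarrow> \<exists>w'. ceq w w' \<and> length w' = len w"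
  unfolding len_def by (rule LeastI_ex) (auto intro: cox_eq.refl)

lemma len_le: "ceq w w' \<Longrightarrow> len w \<le> length w'"
  unfolding len_def by (rule Least_le) auto

lemma len_le_length: "set w \<subseteq> S \<Longrightarrow> len w \<le> length w"
  by (rule len_le) (rule cox_eq.refl)

lemma len_eq: assumes h: "ceq w w'" shows "len w = len w'"
proof -
  have sw: "set w \<subseteq> S" "set w' \<subseteq> S" using cox_eq_set[OF h] by auto
  obtain a where a: "ceq w a" "length a = len w" using len_ex[OF sw(1)] by blast
  obtain b where b: "ceq w' b" "length b = len w'" using len_ex[OF sw(2)] by blast
  have "len w \<le> len w'" using len_le[of w b] cox_eq.trans[OF h b(1)] b(2) by simp
  moreover have "len w' \<le> len w" using len_le[of w' a] cox_eq.trans[OF cox_eq.sym[OF h] a(1)] a(2) by simp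
  ultimately show ?thesis by simp
qed

lemma len_parity: "set w \<subseteq> S \<Longrightarrow> even (len w + length w)"
proof -
  assume "set w \<subseteq> S"
  then obtain a where a: "ceq w a" "length a = len w" using len_ex by blast
  then show ?thesis using cox_eq_parity[OF a(1)] by (simp add: add.commute)
qed

lemma len_app: "set v \<subseteq> S \<Longrightarrow> set u \<subseteq> S \<Longrightarrow> len (v @ u) \<le> len v + length u"
proof -
  assume sv: "set v \<subseteq> S" and su: "set u \<subseteq> S"
  obtain a where a: "ceq v a" "length a = len v" using len_ex[OF sv] by blast
  have "ceq (v @ u) (a @ u)" using cox_eq_appR[OF a(1) su] .
  then have "len (v @ u) \<le> length (a @ u)" by (rule len_le)
  then show ?thesis using a(2) by simp
qed

lemma ss_cancel: "s \<in> S \<Longrightarrow> set u \<subseteq> S \<Longrightarrow> set v \<subseteq> S \<Longrightarrow> ceq (u @ [s, s] @ v) (u @ v)"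
  by (intro cox_eq_ss Mdiag)

lemma len_snoc:
  assumes sw: "set w \<subseteq> S" and s: "s \<in> S"
  shows "len (w @ [s]) = Suc (len w) \<or> Suc (len (w @ [s])) = len w"
proof -
  have 1: "len (w @ [s]) \<le> len w + 1" using len_app[OF sw, of "[s]"] s by simp
  have "ceq (w @ [s, s] @ []) (w @ [])" using ss_cancel[of s w "[]"] s sw by simp
  then have "len w = len ((w @ [s]) @ [s])" using len_eq by simp
  also have "\<dots> \<le> len (w @ [s]) + 1" using len_app[of "w @ [s]" "[s]"] s sw by simp
  finally have 2: "len w \<le> len (w @ [s]) + 1" .
  have p1: "even (len (w @ [s]) + length w + 1)" using len_parity[of "w @ [s]"] sw s by simp
  have p2: "even (len w + length w)" using len_parity[OF sw] .
  have key: "\<And>a b c::nat. a \<le> b + 1 \<Longrightarrow> b \<le> a + 1 \<Longrightarrow> even (a + c + 1) \<Longrightarrow> even (b + c) \<Longrightarrow> a = Suc b \<or> Suc a = b"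
    by presburger
  show ?thesis using key[OF 1 2 p1 p2] .
qed

lemma alt_char:
  assumes "s \<noteq> t" "set u \<subseteq> {s, t}" "\<forall>p x q. u \<noteq> p @ [x, x] @ q" "u \<noteq> [] \<longrightarrow> last u = t"
  shows "u = alt t s (length u)"
  using assms(2-4)
proof (induction u)
  case Nil
  then show ?case by simp
next
  case (Cons x u')
  show ?case
  proof (cases "u' = []")
    case True
    then show ?thesis using Cons.prems(3) by simp
  next
    case False
    have h1: "set u' \<subseteq> {s, t}" using Cons by simp
    have h2: "\<forall>p y q. u' \<noteq> p @ [y, y] @ q"
    proof (intro allI notI)
      fix p y q assume "u' = p @ [y, y] @ q"
      then have "x # u' = (x # p) @ [y, y] @ q" by simp
      then show False using Cons.prems(2) by blast
    qed
    have h3: "u' \<noteq> [] \<longrightarrow> last u' = t" using Cons.prems(3) False by simp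
    have ih: "u' = alt t s (length u')" using Cons.IH h1 h2 h3 by blast
    obtain k where k: "length u' = Suc k" using False by (cases u') auto
    have hd: "hd u' = (if even k then t else s)" using ih k by (metis alt.simps(2) list.sel(1))
    have "x \<noteq> hd u'"
    proof
      assume "x = hd u'"
      then have "x # u' = [] @ [x, x] @ tl u'" using False by simp
      then show False using Cons.prems(2) by blast
    qed
    then have "x = (if even k then s else t)" using hd Cons.prems(1) by auto
    then show ?thesis using ih k by simp
  qed
qed

lemma braid:
  assumes "s \<in> S" "t \<in> S" "M s t = enat m"
  shows "ceq (alt t s m) (alt s t m)"
proof -
  have "ceq ([] @ concat (replicate m [s, t]) @ []) ([] @ [])"
    by (rule cox_eq.rel) (use assms in auto)
  then have "ceq (alt t s (m + m)) []" using alt_double[of t s m] by (simp add: mult_2)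
  then have "ceq ((if even m then alt t s m else alt s t m) @ alt t s m) []"
    by (simp only: alt_add)
  then have "ceq (alt t s m) (rev (if even m then alt t s m else alt s t m))"
    using cox_eq_solve Mdiag' by blast
  then show ?thesis by (cases "even m") (simp_all add: rev_alt)
qed

lemma dihedral:
  assumes st: "s \<in> S" "t \<in> S" "s \<noteq> t" and u: "set u \<subseteq> {s, t}"
    and red: "\<forall>u'. ceq u u' \<longrightarrow> length u \<le> length u'"
    and nos: "\<not> (\<exists>u'. set u' \<subseteq> {s, t} \<and> ceq (u @ [s]) u' \<and> length u' < length u)"
  shows "\<exists>a b. 0 \<le> a \<and> 0 \<le> b \<and> 0 < a + b \<and> (\<forall>h. E u h s = a * h s + b * h t)"
proof -
  have uS: "set u \<subseteq> S" using u st by auto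
  have nodup: "\<forall>p x q. u \<noteq> p @ [x, x] @ q"
  proof (intro allI notI)
    fix p x q assume e: "u = p @ [x, x] @ q"
    have "x \<in> S" "set p \<subseteq> S" "set q \<subseteq> S" using uS e by auto
    then have "ceq u (p @ q)" using e ss_cancel by simp
    then have "length u \<le> length (p @ q)" using red by blast
    then show False using e by simp
  qed
  have lst: "u \<noteq> [] \<longrightarrow> last u = t"
  proof
    assume ne: "u \<noteq> []"
    show "last u = t"
    proof (rule ccontr)
      assume lt: "last u \<noteq> t"
      have "last u \<in> {s, t}" using u ne last_in_set by blast
      then have ls: "last u = s" using lt by blast
      obtain v where uv: "u = v @ [s]" using append_butlast_last_id[OF ne] ls by metis
      have vS: "set v \<subseteq> S" using uS uv by simp
      have "ceq (v @ [s, s] @ []) (v @ [])" by (rule ss_cancel) (use st vS in auto)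
      then have "ceq (u @ [s]) v" using uv by simp
      moreover have "set v \<subseteq> {s, t}" using u uv by simp
      moreover have "length v < length u" using uv by simp
      ultimately show False using nos by blast
    qed
  qed
  define k where "k = length u"
  have ualt: "u = alt t s k" unfolding k_def using alt_char[OF st(3) u nodup lst] .
  have kb: "k < m" if Mm: "M s t = enat m" for m
  proof (rule ccontr)
    assume "\<not> k < m"
    then have km: "m \<le> k" by simp
    have m2: "2 \<le> m" using Mge2 st Mm by blast
    define p where "p = (if even m then alt t s (k - m) else alt s t (k - m))"
    have psst: "set p \<subseteq> {s, t}" using alt_set[of t s "k-m"] alt_set[of s t "k-m"] unfolding p_def by auto
    have ps: "set p \<subseteq> S" using psst st by auto
    have up: "u = p @ alt t s m" using ualt alt_add[of t s "k - m" m] km unfolding p_def by simp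
    have br: "ceq (alt t s m) (alt s t m)" using braid[OF st(1,2) Mm] .
    have as: "alt s t m = alt t s (m - 1) @ [s]" using alt_snoc[of s t "m - 1"] m2 by (simp add: Suc_diff_1)
    have altS: "set (alt t s (m - 1)) \<subseteq> S" using alt_set[of t s "m - 1"] st by auto
    have "ceq (p @ alt t s m @ [s]) (p @ alt s t m @ [s])"
      using cox_eq_cong[OF br ps] st by simp
    also have "p @ alt s t m @ [s] = (p @ alt t s (m - 1)) @ [s, s] @ []" using as by simp
    also have "ceq \<dots> ((p @ alt t s (m - 1)) @ [])" by (rule ss_cancel) (use st ps altS in auto)
    finally have c1: "ceq (u @ [s]) (p @ alt t s (m - 1))" using up by simp
    have "set (p @ alt t s (m - 1)) \<subseteq> {s, t}" using psst alt_set[of t s "m - 1"] by auto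
    moreover have "length (p @ alt t s (m - 1)) < length u" using up m2 km by (simp add: p_def k_def)
    ultimately show False using nos c1 by blast
  qed
  define c where "c = - B s t"
  have Bst: "B s t = - c" by (simp add: c_def)
  have Bts: "B t s = - c" using Bsym st by (simp add: c_def)
  have Eu: "E u h s = U c (Suc k) * h (if even k then s else t) + U c k * h (if even k then t else s)" for h
    using E_alt[OF Bts Bst, of k h] ualt by simp
  have pos: "0 \<le> U c k \<and> 0 \<le> U c (Suc k) \<and> 0 < U c k + U c (Suc k)"
  proof (cases "M s t")
    case (enat m)
    have km: "k < m" using kb enat by blast
    have m2: "2 \<le> m" using Mge2 st enat by blast
    define th where "th = pi / real m"
    have cth: "c = cos th" using Bfin[OF st enat] by (simp add: c_def th_def)
    have th0: "0 < th" using m2 by (simp add: th_def)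
    have sth: "0 < sin th" using m2 by (intro sin_gt_zero) (auto simp: th_def field_simps)
    have Uj: "U c j = sin (real j * th) / sin th" for j using U_sin[of th j] sth cth by simp
    have nn: "0 \<le> U c j" if "j \<le> m" for j
    proof -
      have "real j * th \<le> pi" using that m2 by (simp add: th_def field_simps)
      then have "0 \<le> sin (real j * th)" using th0 by (intro sin_ge_zero) auto
      then show ?thesis using Uj sth by simp
    qed
    have pp: "0 < U c j" if "0 < j" "j < m" for j
    proof -
      have "real j * th < pi" using that m2 by (simp add: th_def field_simps)
      moreover have "0 < real j * th" using that th0 by simp
      ultimately have "0 < sin (real j * th)" by (intro sin_gt_zero)
      then show ?thesis using Uj sth by simp
    qed
    have "0 < U c k + U c (Suc k)"
    proof (cases "k = 0")
      case True
      then show ?thesis by simp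
    next
      case False
      then show ?thesis using pp[of k] nn[of "Suc k"] km by simp
    qed
    then show ?thesis using nn[of k] nn[of "Suc k"] km by simp
  next
    case infinity
    have "c \<ge> 1" using Binf[OF st infinity] by (simp add: c_def)
    then have "real k \<le> U c k" "U c k + 1 \<le> U c (Suc k)" using U_ge by auto
    then show ?thesis by linarith
  qed
  show ?thesis
  proof (cases "even k")
    case True
    then show ?thesis using pos Eu by (intro exI[of _ "U c (Suc k)"] exI[of _ "U c k"]) (auto simp: add.commute)
  next
    case False
    then show ?thesis using pos Eu by (intro exI[of _ "U c k"] exI[of _ "U c (Suc k)"]) auto
  qed
qed

end

context cox begin

lemma tits:
  "set w \<subseteq> S \<Longrightarrow> s \<in> S \<Longrightarrow> len w < len (w @ [s]) \<Longrightarrow> (\<forall>x\<in>S. 0 < f x) \<Longrightarrow> 0 < E w f s"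
proof (induction "len w" arbitrary: w s f rule: less_induct)
  case less
  note IH = less.hyps
  have wS: "set w \<subseteq> S" and sS: "s \<in> S" and lws: "len w < len (w @ [s])" and fpos: "\<forall>x\<in>S. 0 < f x"
    using less.prems by auto
  obtain w0 where w0: "ceq w w0" "length w0 = len w" using len_ex[OF wS] by blast
  show ?case
  proof (cases "len w = 0")
    case True
    then have "w0 = []" using w0 by simp
    then have "E w f = E [] f" using E_cong[OF w0(1)] by simp
    then show ?thesis using fpos sS by simp
  next
    case False
    then have "w0 \<noteq> []" using w0 by auto
    then obtain w1 t where w1: "w0 = w1 @ [t]" by (metis rev_exhaust)
    have w0S: "set w0 \<subseteq> S" using cox_eq_set[OF w0(1)] by simp
    have w1S: "set w1 \<subseteq> S" and tS: "t \<in> S" using w0S w1 by auto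
    have lw0: "len w0 = len w" using len_eq[OF w0(1)] by simp
    have "len w1 \<le> length w1" using len_le_length[OF w1S] .
    moreover have "len w0 \<le> len w1 + 1" using len_app[OF w1S, of "[t]"] tS w1 by simp
    ultimately have lw1: "len w1 + 1 = len w" using w0(2) w1 lw0 by simp
    have "ceq (w @ [t]) (w0 @ [t])" using cox_eq_appR[OF w0(1)] tS by simp
    also have "w0 @ [t] = w1 @ [t, t] @ []" using w1 by simp
    also have "ceq \<dots> (w1 @ [])" by (rule ss_cancel) (use tS w1S in auto)
    finally have "ceq (w @ [t]) w1" by simp
    then have lwt: "len (w @ [t]) < len w" using len_eq lw1 len_le_length[OF w1S] by fastforce
    have st: "s \<noteq> t" using lwt lws by auto
    define A where "A = {(v, u). set v \<subseteq> S \<and> set u \<subseteq> {s, t} \<and> ceq w (v @ u) \<and> len w = len v + length u}"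
    have w1A: "(w1, [t]) \<in> A" unfolding A_def using w1S w0 w1 lw1 by auto
    define n where "n = (LEAST n. \<exists>v u. (v, u) \<in> A \<and> len v = n)"
    have "\<exists>v u. (v, u) \<in> A \<and> len v = n" unfolding n_def
      by (rule LeastI_ex) (use w1A in blast)
    then obtain v u where vuA: "(v, u) \<in> A" and lvn: "len v = n" by blast
    have nmin: "n \<le> len v'" if "(v', u') \<in> A" for v' u'
      unfolding n_def by (rule Least_le) (use that in blast)
    have vS: "set v \<subseteq> S" and uI: "set u \<subseteq> {s, t}" and wvu: "ceq w (v @ u)"
      and lvu: "len w = len v + length u" using vuA unfolding A_def by auto
    have uS: "set u \<subseteq> S" using uI sS tS by auto
    have lvw: "len v < len w" using nmin[OF w1A] lvn lw1 by simp
    have grow: "len v < len (v @ [r])" if rI: "r \<in> {s, t}" for r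
    proof (rule ccontr)
      assume "\<not> len v < len (v @ [r])"
      have rS: "r \<in> S" using rI sS tS by auto
      have sh: "Suc (len (v @ [r])) = len v" using len_snoc[OF vS rS] \<open>\<not> len v < len (v @ [r])\<close> by auto
      have "ceq (v @ [r, r] @ u) (v @ u)" by (rule ss_cancel) (use rS vS uS in auto)
      then have "ceq w ((v @ [r]) @ (r # u))" using wvu by (auto intro: cox_eq.trans cox_eq.sym)
      moreover have "set (v @ [r]) \<subseteq> S" "set (r # u) \<subseteq> {s, t}" using vS rS rI uI by auto
      moreover have "len w = len (v @ [r]) + length (r # u)" using lvu sh by simp
      ultimately have "(v @ [r], r # u) \<in> A" unfolding A_def by auto
      then have "n \<le> len (v @ [r])" by (rule nmin)
      then show False using sh lvn by simp
    qed
    have ps: "0 < E v f s" using IH[OF lvw vS sS grow[of s] fpos] by simp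
    have pt: "0 < E v f t" using IH[OF lvw vS tS grow[of t] fpos] by simp
    have red: "\<forall>u'. ceq u u' \<longrightarrow> length u \<le> length u'"
    proof (intro allI impI)
      fix u' assume uu: "ceq u u'"
      have u'S: "set u' \<subseteq> S" using cox_eq_set[OF uu] by simp
      have "ceq (v @ u) (v @ u')" using cox_eq_appL[OF uu vS] .
      then have "len w = len (v @ u')" using len_eq wvu cox_eq.trans by metis
      also have "\<dots> \<le> len v + length u'" using len_app[OF vS u'S] .
      finally show "length u \<le> length u'" using lvu by simp
    qed
    have nos: "\<not> (\<exists>u'. set u' \<subseteq> {s, t} \<and> ceq (u @ [s]) u' \<and> length u' < length u)"
    proof
      assume "\<exists>u'. set u' \<subseteq> {s, t} \<and> ceq (u @ [s]) u' \<and> length u' < length u"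
      then obtain u' where u': "set u' \<subseteq> {s, t}" "ceq (u @ [s]) u'" "length u' < length u" by blast
      have u'S: "set u' \<subseteq> S" using u'(1) sS tS by auto
      have "ceq (w @ [s]) ((v @ u) @ [s])" using cox_eq_appR[OF wvu] sS by simp
      also have "(v @ u) @ [s] = v @ (u @ [s])" by simp
      also have "ceq \<dots> (v @ u')" using cox_eq_appL[OF u'(2) vS] .
      finally have "len (w @ [s]) = len (v @ u')" using len_eq by blast
      also have "\<dots> \<le> len v + length u'" using len_app[OF vS u'S] .
      finally show False using lvu lws u'(3) by simp
    qed
    obtain a b where ab: "0 \<le> a" "0 \<le> b" "0 < a + b" "\<forall>h. E u h s = a * h s + b * h t"
      using dihedral[OF sS tS st uI red nos] by blast
    have "E w f s = E (v @ u) f s" using E_cong[OF wvu] by simp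
    also have "\<dots> = a * E v f s + b * E v f t" using ab(4) by (simp add: E_app)
    finally have ew: "E w f s = a * E v f s + b * E v f t" .
    show ?thesis
    proof (cases "0 < a")
      case True
      have "0 < a * E v f s" using True ps by simp
      moreover have "0 \<le> b * E v f t" using ab(2) pt by simp
      ultimately show ?thesis using ew by simp
    next
      case False
      then have "0 < b" using ab by simp
      then have "0 < b * E v f t" using pt by simp
      moreover have "0 \<le> a * E v f s" using ab(1) ps by simp
      ultimately show ?thesis using ew by simp
    qed
  qed
qed

lemma faithful:
  assumes wS: "set w \<subseteq> S" and fpos: "\<forall>x\<in>S. 0 < f x" and id: "E w f = f"
  shows "ceq w []"
proof (rule ccontr)
  assume nc: "\<not> ceq w []"
  obtain w0 where w0: "ceq w w0" "length w0 = len w" using len_ex[OF wS] by blast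
  have "w0 \<noteq> []" using w0 nc by auto
  then obtain w1 s where w1: "w0 = w1 @ [s]" by (metis rev_exhaust)
  have w0S: "set w0 \<subseteq> S" using cox_eq_set[OF w0(1)] by simp
  have w1S: "set w1 \<subseteq> S" and sS: "s \<in> S" using w0S w1 by auto
  have "len (w1 @ [s]) = len w" using len_eq[OF w0(1)] w1 by simp
  moreover have "len w1 \<le> length w1" using len_le_length[OF w1S] .
  ultimately have "len w1 < len (w1 @ [s])" using w0(2) w1 by simp
  then have p: "0 < E w1 f s" using tits[OF w1S sS] fpos by simp
  have "E w f s = E w0 f s" using E_cong[OF w0(1)] by simp
  also have "\<dots> = - E w1 f s" using w1 E_snoc_self by simp
  finally have "E w f s < 0" using p by simp
  then show False using id fpos sS by auto
qed

end

lemma enat_2_minus: "(2::enat) + x - 2 = x" "x + (2::enat) - 2 = x"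
  by (cases x; simp add: numeral_eq_enat)+

definition B0 :: "('a \<Rightarrow> 'a \<Rightarrow> enat) \<Rightarrow> 'a \<Rightarrow> 'a \<Rightarrow> real" where
  "B0 M s t = (if s = t then 1 else (case M s t of enat m \<Rightarrow> - cos (pi / real m) | \<infinity> \<Rightarrow> -1))"

definition Bc :: "('a \<Rightarrow> 'a \<Rightarrow> enat) \<Rightarrow> 'a \<Rightarrow> 'a \<Rightarrow> 'a option \<Rightarrow> 'a option \<Rightarrow> real" where
  "Bc M sp sm x y = (case (x, y) of (Some s, Some t) \<Rightarrow> B0 M s t | (None, None) \<Rightarrow> 1
      | (Some s, None) \<Rightarrow> B0 M s sp + B0 M s sm | (None, Some t) \<Rightarrow> B0 M sp t + B0 M sm t)"

locale ctr =
  fixes S :: "'a set" and M :: "'a \<Rightarrow> 'a \<Rightarrow> enat" and sp sm :: 'a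
  assumes cm: "coxeter_matrix S M" and sp: "sp \<in> S" and sm: "sm \<in> S" and spm: "sp \<noteq> sm"
    and M3: "M sp sm = 3"
begin

abbreviation "S' \<equiv> contract_set S sp sm"
abbreviation "N \<equiv> contract_matrix M sp sm"
abbreviation "B \<equiv> B0 M"
abbreviation "B' \<equiv> Bc M sp sm"

lemma Mdiag: "s \<in> S \<Longrightarrow> M s s = 1" using cm unfolding coxeter_matrix_def by auto
lemma Msym: "s \<in> S \<Longrightarrow> t \<in> S \<Longrightarrow> M s t = M t s" using cm unfolding coxeter_matrix_def by auto
lemma Mne1: "s \<in> S \<Longrightarrow> t \<in> S \<Longrightarrow> s \<noteq> t \<Longrightarrow> M s t \<noteq> 1" using cm unfolding coxeter_matrix_def by auto
lemma Mge1: "s \<in> S \<Longrightarrow> t \<in> S \<Longrightarrow> 1 \<le> M s t" using cm unfolding coxeter_matrix_def by auto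

lemma Mge2: "s \<in> S \<Longrightarrow> t \<in> S \<Longrightarrow> s \<noteq> t \<Longrightarrow> M s t = enat m \<Longrightarrow> 2 \<le> m"
proof -
  assume a: "s \<in> S" "t \<in> S" "s \<noteq> t" "M s t = enat m"
  have "1 \<le> m" using Mge1[OF a(1,2)] a(4) by (simp add: one_enat_def)
  moreover have "m \<noteq> 1" using Mne1[OF a(1,2,3)] a(4) by (auto simp: one_enat_def)
  ultimately show ?thesis by simp
qed

lemma B_fin: "s \<noteq> t \<Longrightarrow> M s t = enat m \<Longrightarrow> B s t = - cos (pi / real m)"
  by (simp add: B0_def)
lemma B_inf: "s \<noteq> t \<Longrightarrow> M s t = \<infinity> \<Longrightarrow> B s t = -1"
  by (simp add: B0_def)
lemma B_2: "s \<noteq> t \<Longrightarrow> M s t = 2 \<Longrightarrow> B s t = 0"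
  by (simp add: B0_def numeral_eq_enat)
lemma B_diag: "B s s = 1" by (simp add: B0_def)
lemma B_sym: "s \<in> S \<Longrightarrow> t \<in> S \<Longrightarrow> B s t = B t s"
  using Msym by (simp add: B0_def)

lemma B_le_half:
  assumes "s \<in> S" "t \<in> S" "s \<noteq> t" "M s t \<noteq> 2"
  shows "B s t \<le> - 1 / 2"
proof (cases "M s t")
  case (enat m)
  have "2 \<le> m" using Mge2 assms enat by blast
  moreover have "m \<noteq> 2" using assms(4) enat by (auto simp: numeral_eq_enat)
  ultimately have m3: "3 \<le> m" by simp
  have "pi / real m \<le> pi / 3" by (rule divide_left_mono) (use m3 in auto)
  then have "cos (pi / 3) \<le> cos (pi / real m)"
    by (intro cos_monotone_0_pi_le) (auto simp: m3)
  then show ?thesis using B_fin[OF assms(3) enat] by (simp add: cos_60)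
next
  case infinity
  then show ?thesis using B_inf[OF assms(3)] by simp
qed

lemma Bsp_sm: "B sp sm = - 1 / 2" "B sm sp = - 1 / 2"
proof -
  have "M sp sm = enat 3" using M3 by (simp add: numeral_eq_enat)
  then show "B sp sm = - 1 / 2" using B_fin spm by (simp add: cos_60)
  then show "B sm sp = - 1 / 2" using B_sym sp sm by simp
qed

sublocale W: cox S M B
proof
  show "\<And>s. s \<in> S \<Longrightarrow> M s s = 1" by (rule Mdiag)
  show "\<And>s t. s \<in> S \<Longrightarrow> t \<in> S \<Longrightarrow> M s t = M t s" by (rule Msym)
  show "\<And>s t m. s \<in> S \<Longrightarrow> t \<in> S \<Longrightarrow> s \<noteq> t \<Longrightarrow> M s t = enat m \<Longrightarrow> 2 \<le> m" by (rule Mge2)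
  show "\<And>s. B s s = 1" by (rule B_diag)
  show "\<And>s t. s \<in> S \<Longrightarrow> t \<in> S \<Longrightarrow> B s t = B t s" by (rule B_sym)
  show "\<And>s t m. s \<in> S \<Longrightarrow> t \<in> S \<Longrightarrow> s \<noteq> t \<Longrightarrow> M s t = enat m \<Longrightarrow> B s t = - cos (pi / real m)"
    by (rule B_fin)
  show "\<And>s t. s \<in> S \<Longrightarrow> t \<in> S \<Longrightarrow> s \<noteq> t \<Longrightarrow> M s t = \<infinity> \<Longrightarrow> B s t \<le> -1"
    using B_inf by simp
qed

lemma S'_iff: "x \<in> S' \<longleftrightarrow> x = None \<or> (\<exists>s. x = Some s \<and> s \<in> S \<and> s \<noteq> sp \<and> s \<noteq> sm)"
  by (cases x) (auto simp: contract_set_def)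

lemma N_SN: "N (Some s) None = (if M s sp = 2 \<or> M s sm = 2 then M s sp + M s sm - 2 else \<infinity>)"
  by (simp add: contract_matrix_def)
lemma N_NS: "N None (Some s) = (if M s sp = 2 \<or> M s sm = 2 then M s sp + M s sm - 2 else \<infinity>)"
  by (simp add: contract_matrix_def)
lemma N_SS: "N (Some s) (Some t) = M s t" by (simp add: contract_matrix_def)
lemma N_NN: "N None None = 1" by (simp add: contract_matrix_def)

lemma S'_pair_cases:
  assumes "x \<in> S'" "y \<in> S'" "x \<noteq> y"
    and "\<And>s t. x = Some s \<Longrightarrow> y = Some t \<Longrightarrow> s \<in> S \<Longrightarrow> t \<in> S \<Longrightarrow> s \<noteq> t \<Longrightarrow> P"
    and "\<And>s. x = Some s \<Longrightarrow> y = None \<Longrightarrow> s \<in> S \<Longrightarrow> s \<noteq> sp \<Longrightarrow> s \<noteq> sm \<Longrightarrow> P"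
    and "\<And>s. x = None \<Longrightarrow> y = Some s \<Longrightarrow> s \<in> S \<Longrightarrow> s \<noteq> sp \<Longrightarrow> s \<noteq> sm \<Longrightarrow> P"
  shows P
  using assms unfolding S'_iff by (cases x; cases y) auto

lemma B'_SS: "B' (Some s) (Some t) = B s t" by (simp add: Bc_def)
lemma B'_SN: "B' (Some s) None = B s sp + B s sm" by (simp add: Bc_def)
lemma B'_NS: "B' None (Some s) = B sp s + B sm s" by (simp add: Bc_def)
lemma B'_NN: "B' None None = 1" by (simp add: Bc_def)

lemma N_fin_cases:
  assumes "s \<in> S" "s \<noteq> sp" "s \<noteq> sm" "N (Some s) None = enat n"
  shows "(M s sp = 2 \<and> M s sm = enat n) \<or> (M s sm = 2 \<and> M s sp = enat n)"
proof (cases "M s sp = 2")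
  case True
  then show ?thesis using assms(4) by (simp add: N_SN enat_2_minus)
next
  case False
  then have "M s sm = 2" using assms(4) by (auto simp: N_SN split: if_splits)
  then show ?thesis using assms(4) by (simp add: N_SN enat_2_minus)
qed

lemma B'_fin:
  assumes "s \<in> S" "s \<noteq> sp" "s \<noteq> sm" "N (Some s) None = enat n"
  shows "B s sp + B s sm = - cos (pi / real n)"
  using N_fin_cases[OF assms] B_2 B_fin assms(2,3) by auto

lemma B'_inf:
  assumes "s \<in> S" "s \<noteq> sp" "s \<noteq> sm" "N (Some s) None = \<infinity>"
  shows "B s sp + B s sm \<le> -1"
proof (cases "M s sp = 2 \<or> M s sm = 2")
  case True
  then show ?thesis
  proof
    assume a: "M s sp = 2"
    then have "M s sm = \<infinity>" using assms(4) by (simp add: N_SN enat_2_minus)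
    then show ?thesis using a B_2 B_inf assms(2,3) by simp
  next
    assume a: "M s sm = 2"
    then have "M s sp = \<infinity>" using assms(4) by (simp add: N_SN enat_2_minus)
    then show ?thesis using a B_2 B_inf assms(2,3) by simp
  qed
next
  case False
  then have "B s sp \<le> -1/2" "B s sm \<le> -1/2" using B_le_half assms sp sm by auto
  then show ?thesis by simp
qed

sublocale W': cox S' N B'
proof
  show "\<And>x. x \<in> S' \<Longrightarrow> N x x = 1"
    using Mdiag by (auto simp: S'_iff N_SS N_NN)
  show "\<And>x y. x \<in> S' \<Longrightarrow> y \<in> S' \<Longrightarrow> N x y = N y x"
    using Msym by (auto simp: S'_iff N_SS N_NN N_SN N_NS)
  show "\<And>x. B' x x = 1" 
    subgoal for x by (cases x) (auto simp: B'_SS B'_NN B_diag)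
    done
  show "\<And>x y. x \<in> S' \<Longrightarrow> y \<in> S' \<Longrightarrow> B' x y = B' y x"
    using B_sym sp sm by (auto simp: S'_iff B'_SS B'_NN B'_SN B'_NS)
  show "\<And>x y m. x \<in> S' \<Longrightarrow> y \<in> S' \<Longrightarrow> x \<noteq> y \<Longrightarrow> N x y = enat m \<Longrightarrow> 2 \<le> m"
  proof -
    fix x y m assume a: "x \<in> S'" "y \<in> S'" "x \<noteq> y" "N x y = enat m"
    have h: "2 \<le> m" if "s \<in> S" "s \<noteq> sp" "s \<noteq> sm" "N (Some s) None = enat m" for s
      using N_fin_cases[OF that] Mge2 that sp sm by metis
    show "2 \<le> m"
    proof (cases x)
      case None
      then obtain t where y: "y = Some t" "t \<in> S" "t \<noteq> sp" "t \<noteq> sm" using a by (auto simp: S'_iff)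
      then show ?thesis using h[of t] a None N_NS N_SN by simp
    next
      case (Some s)
      then have s: "s \<in> S" "s \<noteq> sp" "s \<noteq> sm" using a by (auto simp: S'_iff)
      show ?thesis
      proof (cases y)
        case None
        then show ?thesis using h[of s] a Some s by simp
      next
        case (Some t)
        then have "t \<in> S" using a by (auto simp: S'_iff)
        then show ?thesis using Mge2[of s t m] a Some \<open>x = Some s\<close> s N_SS by simp
      qed
    qed
  qed
  show "\<And>x y m. x \<in> S' \<Longrightarrow> y \<in> S' \<Longrightarrow> x \<noteq> y \<Longrightarrow> N x y = enat m \<Longrightarrow> B' x y = - cos (pi / real m)"
  proof -
    fix x y m assume a: "x \<in> S'" "y \<in> S'" "x \<noteq> y" "N x y = enat m"
    have h: "B s sp + B s sm = - cos (pi / real m)" if "s \<in> S" "s \<noteq> sp" "s \<noteq> sm" "N (Some s) None = enat m" for s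
      using B'_fin[OF that] .
    show "B' x y = - cos (pi / real m)"
      apply (rule S'_pair_cases[OF a(1-3)])
      using a h B_fin B_sym sp sm by (auto simp: N_SS N_NS N_SN B'_SS B'_SN B'_NS)
  qed
  show "\<And>x y. x \<in> S' \<Longrightarrow> y \<in> S' \<Longrightarrow> x \<noteq> y \<Longrightarrow> N x y = \<infinity> \<Longrightarrow> B' x y \<le> -1"
  proof -
    fix x y assume a: "x \<in> S'" "y \<in> S'" "x \<noteq> y" "N x y = \<infinity>"
    have h: "B s sp + B s sm \<le> -1" if "s \<in> S" "s \<noteq> sp" "s \<noteq> sm" "N (Some s) None = \<infinity>" for s
      using B'_inf[OF that] .
    show "B' x y \<le> -1"
      apply (rule S'_pair_cases[OF a(1-3)])
      using a h B_inf B_sym sp sm by (auto simp: N_SS N_NS N_SN B'_SS B'_SN B'_NS)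
  qed
qed

end

lemma class_eq:
  assumes "set w \<subseteq> S" "set w' \<subseteq> S"
  shows "cox_class S M w = cox_class S M w' \<longleftrightarrow> cox_eq S M w w'"
proof
  assume e: "cox_class S M w = cox_class S M w'"
  have "w' \<in> cox_class S M w'" using assms by (simp add: cox_class_def cox_eq.refl)
  then have "w' \<in> cox_class S M w" using e by simp
  then show "cox_eq S M w w'" by (simp add: cox_class_def)
next
  assume h: "cox_eq S M w w'"
  show "cox_class S M w = cox_class S M w'"
    unfolding cox_class_def using h by (blast intro: cox_eq.trans cox_eq.sym)
qed

lemma class_mult:
  assumes "set a \<subseteq> S" "set b \<subseteq> S"
  shows "cox_class S M a \<otimes>\<^bsub>coxeter_group S M\<^esub> cox_class S M b = cox_class S M (a @ b)"
proof -
  have "{w. \<exists>a'\<in>cox_class S M a. \<exists>b'\<in>cox_class S M b. cox_eq S M (a' @ b') w} = cox_class S M (a @ b)"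
    (is "?L = ?R")
  proof
    show "?L \<subseteq> ?R"
    proof
      fix w assume "w \<in> ?L"
      then obtain a' b' where "cox_eq S M a a'" "cox_eq S M b b'" "cox_eq S M (a' @ b') w"
        by (auto simp: cox_class_def)
      then have "cox_eq S M (a @ b) w" by (meson cox_eq.trans cox_eq_app)
      then show "w \<in> ?R" by (simp add: cox_class_def)
    qed
    show "?R \<subseteq> ?L"
    proof
      fix w assume "w \<in> ?R"
      then have "cox_eq S M (a @ b) w" by (simp add: cox_class_def)
      moreover have "a \<in> cox_class S M a" "b \<in> cox_class S M b"
        using assms by (auto simp: cox_class_def intro: cox_eq.refl)
      ultimately show "w \<in> ?L" by blast
    qed
  qed
  then show ?thesis by (simp add: coxeter_group_def)
qed

lemma carrier_cg: "carrier (coxeter_group S M) = {cox_class S M w | w. set w \<subseteq> S}"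
  by (simp add: coxeter_group_def)

lemma concat_rep_comm: "concat (replicate n z) @ z = z @ concat (replicate n z)"
  by (induction n) auto

lemma rev_concat_rep: "rev (concat (replicate n z)) = concat (replicate n (rev z))"
  by (induction n) (auto simp: concat_rep_comm)

context ctr begin

definition gs :: "'a option \<Rightarrow> 'a list" where
  "gs x = (case x of Some s \<Rightarrow> [s] | None \<Rightarrow> [sp, sm, sp])"

definition sub :: "'a option list \<Rightarrow> 'a list" where
  "sub w = concat (map gs w)"

lemma sub_append[simp]: "sub (u @ v) = sub u @ sub v" by (simp add: sub_def)
lemma sub_Cons: "sub (x # w) = gs x @ sub w" by (simp add: sub_def)
lemma sub_Nil[simp]: "sub [] = []" by (simp add: sub_def)

lemma sub_set: "set w \<subseteq> S' \<Longrightarrow> set (sub w) \<subseteq> S"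
  by (induction w) (auto simp: sub_Cons gs_def S'_iff sp sm split: option.splits)

lemma sub_rep: "sub (concat (replicate n [x, y])) = concat (replicate n (gs x @ gs y))"
  by (induction n) (auto simp: sub_def)

abbreviation "ceqW \<equiv> cox_eq S M"

lemma commute:
  assumes "s \<in> S" "a \<in> S" "M s a = 2"
  shows "ceqW [s, a] [a, s]"
proof -
  have "ceqW ([] @ concat (replicate 2 [s, a]) @ []) ([] @ [])"
    by (rule cox_eq.rel) (use assms in \<open>auto simp: numeral_eq_enat\<close>)
  then have "ceqW ([s, a] @ [s, a]) []" by (simp add: numeral_2_eq_2)
  then have "ceqW [s, a] (rev [s, a])" using cox_eq_solve W.Mdiag' by blast
  then show ?thesis by simp
qed

lemma conj_rel:
  assumes s: "s \<in> S" and a: "a \<in> S" and b: "b \<in> S" and sa: "M s a = 2" and sb: "M s b = enat n"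
  shows "ceqW (concat (replicate n [s, a, b, a])) []"
proof -
  have key: "ceqW (concat (replicate k [s, a, b, a])) ([a] @ concat (replicate k [s, b]) @ [a])" for k
  proof (induction k)
    case 0
    have "ceqW ([] @ [a, a] @ []) ([] @ [])" by (rule W.ss_cancel) (use a in auto)
    then show ?case by (simp add: cox_eq.sym)
  next
    case (Suc k)
    define Y where "Y = concat (replicate k [s, b])"
    have YS: "set Y \<subseteq> S" using s b by (auto simp: Y_def)
    have "ceqW (concat (replicate (Suc k) [s, a, b, a])) ([s, a, b, a] @ ([a] @ Y @ [a]))"
      using cox_eq_appL[OF Suc[folded Y_def], of "[s, a, b, a]"] s a b by simp
    also have "[s, a, b, a] @ ([a] @ Y @ [a]) = [s, a, b] @ [a, a] @ (Y @ [a])" by simp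
    also have "ceqW \<dots> ([s, a, b] @ (Y @ [a]))" by (rule W.ss_cancel) (use s a b YS in auto)
    also have "[s, a, b] @ (Y @ [a]) = [s, a] @ ([b] @ Y @ [a])" by simp
    also have "ceqW \<dots> ([a, s] @ ([b] @ Y @ [a]))"
      by (rule cox_eq_appR[OF commute[OF s a sa]]) (use b YS a in auto)
    also have "[a, s] @ ([b] @ Y @ [a]) = [a] @ concat (replicate (Suc k) [s, b]) @ [a]"
      by (simp add: Y_def)
    finally show ?case .
  qed
  have r: "ceqW ([] @ concat (replicate n [s, b]) @ []) ([] @ [])"
    by (rule cox_eq.rel) (use s b sb in auto)
  have "ceqW ([a] @ concat (replicate n [s, b]) @ [a]) ([a] @ [] @ [a])"
    using cox_eq_cong[OF r, of "[a]" "[a]"] a by simp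
  also have "ceqW ([a] @ [] @ [a]) []" using W.ss_cancel[of a "[]" "[]"] a by simp
  finally show ?thesis using key[of n] cox_eq.trans by blast
qed

lemma rev_nil: "ceqW w [] \<Longrightarrow> ceqW (rev w) []"
proof -
  assume h: "ceqW w []"
  have wS: "set w \<subseteq> S" using cox_eq_set[OF h] by simp
  have "ceqW (rev w @ []) (rev w @ w)" using cox_eq_appL[OF cox_eq.sym[OF h]] wS by simp
  also have "ceqW (rev w @ w) []" using cox_eq_inv wS W.Mdiag' by blast
  finally show ?thesis by simp
qed

lemma rep_cong: "ceqW x y \<Longrightarrow> ceqW (concat (replicate n x)) (concat (replicate n y))"
  by (induction n) (auto intro: cox_eq.refl cox_eq_app)

lemma gen_rel:
  assumes x: "x \<in> S'" and y: "y \<in> S'" and n: "N x y = enat n"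
  shows "ceqW (concat (replicate n (gs x @ gs y))) []"
proof -
  have SN: "ceqW (concat (replicate n ([s] @ [sp, sm, sp]))) []"
    if s: "s \<in> S" "s \<noteq> sp" "s \<noteq> sm" and ns: "N (Some s) None = enat n" for s
  proof -
    from N_fin_cases[OF s ns] show ?thesis
    proof
      assume h: "M s sp = 2 \<and> M s sm = enat n"
      show ?thesis using conj_rel[OF s(1) sp sm] h by simp
    next
      assume h: "M s sm = 2 \<and> M s sp = enat n"
      have M3': "M sp sm = enat 3" using M3 by (simp add: numeral_eq_enat)
      have br: "ceqW (alt sm sp 3) (alt sp sm 3)" using W.braid[OF sp sm M3'] .
      have br': "ceqW [sp, sm, sp] [sm, sp, sm]" using cox_eq.sym[OF br] by (simp add: numeral_3_eq_3)
      have "ceqW ([s] @ [sp, sm, sp]) ([s] @ [sm, sp, sm])" using cox_eq_appL[OF br', of "[s]"] s by simp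
      then have "ceqW (concat (replicate n ([s] @ [sp, sm, sp]))) (concat (replicate n [s, sm, sp, sm]))"
        using rep_cong by simp
      also have "ceqW \<dots> []" using conj_rel[OF s(1) sm sp] h by simp
      finally show ?thesis .
    qed
  qed
  show ?thesis
  proof (cases x)
    case None
    note xN = None
    show ?thesis
    proof (cases y)
      case None
      then have "n = 1" using n xN by (simp add: N_NN one_enat_def)
      moreover have "ceqW [sp, sm, sp, sp, sm, sp] []"
      proof -
        have "ceqW ([sp, sm] @ [sp, sp] @ [sm, sp]) ([sp, sm] @ [sm, sp])"
          by (rule W.ss_cancel) (use sp sm in auto)
        also have "[sp, sm] @ [sm, sp] = [sp] @ [sm, sm] @ [sp]" by simp
        also have "ceqW \<dots> ([sp] @ [sp])" by (rule W.ss_cancel) (use sp sm in auto)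
        also have "[sp] @ [sp] = [] @ [sp, sp] @ []" by simp
        also have "ceqW \<dots> ([] @ [])" by (rule W.ss_cancel) (use sp sm in auto)
        finally show ?thesis by simp
      qed
      ultimately show ?thesis using xN None by (simp add: gs_def)
    next
      case (Some t)
      then have t: "t \<in> S" "t \<noteq> sp" "t \<noteq> sm" using y by (auto simp: S'_iff)
      have "N (Some t) None = enat n" using n xN Some by (simp add: N_NS N_SN)
      then have "ceqW (rev (concat (replicate n ([t] @ [sp, sm, sp])))) []" using rev_nil SN t by blast
      then show ?thesis using xN Some by (simp add: rev_concat_rep gs_def)
    qed
  next
    case (Some s)
    then have s: "s \<in> S" "s \<noteq> sp" "s \<noteq> sm" using x by (auto simp: S'_iff)
    show ?thesis
    proof (cases y)
      case None
      then show ?thesis using SN[OF s] n Some by (simp add: gs_def)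
    next
      case (Some t)
      then have t: "t \<in> S" using y by (auto simp: S'_iff)
      have "ceqW ([] @ concat (replicate n [s, t]) @ []) ([] @ [])"
        by (rule cox_eq.rel) (use s t n Some \<open>x = Some s\<close> in \<open>auto simp: N_SS\<close>)
      then show ?thesis using Some \<open>x = Some s\<close> by (simp add: gs_def)
    qed
  qed
qed

lemma sub_cong: "cox_eq S' N w w' \<Longrightarrow> ceqW (sub w) (sub w')"
proof (induction rule: cox_eq.induct)
  case (refl w)
  then show ?case using sub_set by (blast intro: cox_eq.refl)
next
  case (rel u v x y n)
  have "ceqW (sub u @ concat (replicate n (gs x @ gs y)) @ sub v) (sub u @ [] @ sub v)"
    by (rule cox_eq_cong[OF gen_rel]) (use rel sub_set in auto)
  then show ?case by (simp add: sub_rep)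
next
  case (sym w w')
  then show ?case by (blast intro: cox_eq.sym)
next
  case (trans w w' w'')
  then show ?case by (blast intro: cox_eq.trans)
qed

end

context ctr begin

definition phi :: "'a option list set \<Rightarrow> 'a list set" where
  "phi X = cox_class S M (sub (SOME w. set w \<subseteq> S' \<and> X = cox_class S' N w))"

lemma phi_class:
  assumes wS: "set w \<subseteq> S'"
  shows "phi (cox_class S' N w) = cox_class S M (sub w)"
proof -
  define w' where "w' = (SOME w'. set w' \<subseteq> S' \<and> cox_class S' N w = cox_class S' N w')"
  have "set w' \<subseteq> S' \<and> cox_class S' N w = cox_class S' N w'"
    unfolding w'_def by (rule someI[of _ w]) (use wS in auto)
  then have w': "set w' \<subseteq> S'" "cox_eq S' N w w'" using class_eq wS by blast+
  have "ceqW (sub w) (sub w')" using sub_cong[OF w'(2)] .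
  then have "cox_class S M (sub w') = cox_class S M (sub w)"
    using class_eq[OF sub_set[OF w'(1)] sub_set[OF wS]] cox_eq.sym by blast
  then show ?thesis unfolding phi_def w'_def by simp
qed

definition pim :: "('a \<Rightarrow> real) \<Rightarrow> ('a option \<Rightarrow> real)" where
  "pim f = (\<lambda>x. case x of Some s \<Rightarrow> f s | None \<Rightarrow> f sp + f sm)"

lemma pi_step: "pim (W.E (gs x) f) = W'.D x (pim f)"
proof (cases x)
  case None
  show ?thesis
  proof
    fix y
    show "pim (W.E (gs x) f) y = W'.D x (pim f) y"
      using None Bsp_sm B_diag
      by (cases y) (simp_all add: gs_def W.E_def W.D_def W'.D_def pim_def B'_NS B'_NN algebra_simps)
  qed
next
  case (Some s)
  show ?thesis
  proof
    fix y
    show "pim (W.E (gs x) f) y = W'.D x (pim f) y"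
      using Some
      by (cases y) (simp_all add: gs_def W.E_def W.D_def W'.D_def pim_def B'_SS B'_SN algebra_simps)
  qed
qed

lemma pi_E: "pim (W.E (sub w) f) = W'.E w (pim f)"
proof (induction w arbitrary: f)
  case Nil
  then show ?case by simp
next
  case (Cons x w)
  have "pim (W.E (sub (x # w)) f) = pim (W.E (sub w) (W.E (gs x) f))" by (simp add: sub_Cons W.E_app)
  also have "\<dots> = W'.E w (pim (W.E (gs x) f))" using Cons .
  also have "\<dots> = W'.E w (W'.D x (pim f))" by (simp add: pi_step)
  also have "\<dots> = W'.E (x # w) (pim f)" by (simp add: W'.E_Cons)
  finally show ?case .
qed

lemma inj_words:
  assumes w1: "set w1 \<subseteq> S'" and w2: "set w2 \<subseteq> S'" and e: "ceqW (sub w1) (sub w2)"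
  shows "cox_eq S' N w1 w2"
proof -
  define f0 :: "'a \<Rightarrow> real" where "f0 = (\<lambda>_. 1)"
  define F where "F = pim f0"
  have Fpos: "\<forall>x\<in>S'. 0 < F x" by (auto simp: F_def pim_def f0_def split: option.splits)
  have "W.E (sub w1) f0 = W.E (sub w2) f0" using W.E_cong[OF e] .
  then have e1: "W'.E w1 F = W'.E w2 F" using pi_E unfolding F_def by metis
  have inv: "cox_eq S' N (w2 @ rev w2) []" using cox_eq_inv2 w2 W'.Mdiag' by blast
  have "W'.E (w1 @ rev w2) F = W'.E (rev w2) (W'.E w1 F)" by (simp add: W'.E_app)
  also have "\<dots> = W'.E (rev w2) (W'.E w2 F)" using e1 by simp
  also have "\<dots> = W'.E (w2 @ rev w2) F" by (simp add: W'.E_app)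
  also have "\<dots> = W'.E [] F" using W'.E_cong[OF inv] .
  finally have id: "W'.E (w1 @ rev w2) F = F" by simp
  have c: "cox_eq S' N (w1 @ rev w2) []" by (rule W'.faithful[OF _ Fpos id]) (use w1 w2 in auto)
  have "cox_eq S' N ((w1 @ rev w2) @ w2) ([] @ w2)" using cox_eq_appR[OF c w2] .
  moreover have "cox_eq S' N (w1 @ (rev w2 @ w2)) (w1 @ [])"
    using cox_eq_appL[OF cox_eq_inv[of w2 S' N, OF w2 W'.Mdiag'] w1] .
  ultimately show ?thesis by (auto intro: cox_eq.trans cox_eq.sym)
qed

lemma main_ctr:
  "\<exists>\<phi>. \<phi> \<in> hom (coxeter_group S' N) (coxeter_group S M)
           \<and> (\<forall>s\<in>S - {sp, sm}. \<phi> (cox_class S' N [Some s]) = cox_class S M [s])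
           \<and> \<phi> (cox_class S' N [None]) = cox_class S M [sp, sm, sp]
           \<and> inj_on \<phi> (carrier (coxeter_group S' N))"
proof (intro exI conjI)
  show "phi \<in> hom (coxeter_group S' N) (coxeter_group S M)"
  proof (rule homI)
    fix x assume "x \<in> carrier (coxeter_group S' N)"
    then obtain w where x: "x = cox_class S' N w" "set w \<subseteq> S'" by (auto simp: carrier_cg)
    then have "phi x = cox_class S M (sub w)" "set (sub w) \<subseteq> S" using phi_class sub_set by auto
    then show "phi x \<in> carrier (coxeter_group S M)" by (auto simp: carrier_cg)
  next
    fix x y assume "x \<in> carrier (coxeter_group S' N)" "y \<in> carrier (coxeter_group S' N)"
    then obtain a b where x: "x = cox_class S' N a" "set a \<subseteq> S'" and y: "y = cox_class S' N b" "set b \<subseteq> S'"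
      by (auto simp: carrier_cg)
    have "phi (x \<otimes>\<^bsub>coxeter_group S' N\<^esub> y) = phi (cox_class S' N (a @ b))"
      using class_mult[OF x(2) y(2), of N] x y by simp
    also have "\<dots> = cox_class S M (sub a @ sub b)" using phi_class[of "a @ b"] x y by simp
    also have "\<dots> = cox_class S M (sub a) \<otimes>\<^bsub>coxeter_group S M\<^esub> cox_class S M (sub b)"
      using class_mult[OF sub_set[OF x(2)] sub_set[OF y(2)], of M] by simp
    also have "\<dots> = phi x \<otimes>\<^bsub>coxeter_group S M\<^esub> phi y" using phi_class x y by simp
    finally show "phi (x \<otimes>\<^bsub>coxeter_group S' N\<^esub> y) = phi x \<otimes>\<^bsub>coxeter_group S M\<^esub> phi y" .
  qed
  show "\<forall>s\<in>S - {sp, sm}. phi (cox_class S' N [Some s]) = cox_class S M [s]"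
  proof
    fix s assume "s \<in> S - {sp, sm}"
    then have "set [Some s] \<subseteq> S'" by (auto simp: S'_iff)
    then show "phi (cox_class S' N [Some s]) = cox_class S M [s]"
      using phi_class by (simp add: sub_def gs_def)
  qed
  show "phi (cox_class S' N [None]) = cox_class S M [sp, sm, sp]"
    using phi_class[of "[None]"] by (simp add: sub_def gs_def S'_iff)
  show "inj_on phi (carrier (coxeter_group S' N))"
  proof (rule inj_onI)
    fix x y assume "x \<in> carrier (coxeter_group S' N)" "y \<in> carrier (coxeter_group S' N)"
      and e: "phi x = phi y"
    then obtain a b where x: "x = cox_class S' N a" "set a \<subseteq> S'" and y: "y = cox_class S' N b" "set b \<subseteq> S'"
      by (auto simp: carrier_cg)
    have "cox_class S M (sub a) = cox_class S M (sub b)" using e phi_class x y by simp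
    then have "ceqW (sub a) (sub b)" using class_eq[OF sub_set[OF x(2)] sub_set[OF y(2)]] by simp
    then have "cox_eq S' N a b" using inj_words x(2) y(2) by blast
    then show "x = y" using class_eq[OF x(2) y(2)] x y by simp
  qed
qed

end

theorem mainTheorem1:
  fixes S :: "'a set" and M :: "'a \<Rightarrow> 'a \<Rightarrow> enat" and sp sm :: 'a
  assumes "coxeter_matrix S M" and "sp \<in> S" and "sm \<in> S" and "sp \<noteq> sm" and "M sp sm = 3"
  shows "\<exists>\<phi>. \<phi> \<in> hom (coxeter_group (contract_set S sp sm) (contract_matrix M sp sm))
                       (coxeter_group S M)
           \<and> (\<forall>s\<in>S - {sp, sm}.
                 \<phi> (cox_class (contract_set S sp sm) (contract_matrix M sp sm) [Some s])
                   = cox_class S M [s])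
           \<and> \<phi> (cox_class (contract_set S sp sm) (contract_matrix M sp sm) [None])
                   = cox_class S M [sp, sm, sp]
           \<and> inj_on \<phi> (carrier (coxeter_group (contract_set S sp sm) (contract_matrix M sp sm)))"
proof -
  interpret ctr S M sp sm using assms by unfold_locales
  show ?thesis by (rule main_ctr)
qed

end
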